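(* If $T\in\mathcal{O}_H'(\mathbb{R}^d)$, then for every $\varphi\in\mathcal{D}(\mathbb{R}^d)$ the function $y\mapsto T_x(\varphi(xy))$, $y\in\mathbb{R}_*^d$, extends to a function in $C^\infty(\mathbb{R}^d)$.
   Context: $\mathbb{R}_*=\mathbb{R}\setminus\{0\}$; $xy$ is the coordinatewise product (for $y\in\mathbb{R}_*^d$, $x\mapsto\varphi(xy)$ has compact support). Euler derivatives: $\theta_j=x_j\partial_j$, $\theta^\beta=\theta_1^{\beta_1}\cdots\theta_d^{\beta_d}$. $\mathcal{O}_H'(\mathbb{R}^d)$ is the set of $T\in\mathcal{D}'(\mathbb{R}^d)$ such that for every $k\in\mathbb{N}_0$ there are finitely many measurable functions $t_\beta$ with $(1+|x|^2)^{k/2}t_\beta\in L_\infty(\mathbb{R}^d)$ and $T=\sum_\beta\theta^\beta t_\beta$ in the sense of distributions. *)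

theory Defs
  imports "HOL-Analysis.Analysis"
begin

text \<open>Functions on R^d are modelled on the type real^'d ('d a finite index type);
 the coordinatewise product x*y is the product of the vec type.\<close>

definition partial :: "'d::finite \<Rightarrow> (real^'d \<Rightarrow> complex) \<Rightarrow> real^'d \<Rightarrow> complex" where
  "partial j f x = vector_derivative (\<lambda>t. f (x + t *\<^sub>R axis j 1)) (at 0)"

definition pderivs :: "'d::finite list \<Rightarrow> (real^'d \<Rightarrow> complex) \<Rightarrow> real^'d \<Rightarrow> complex" where
  "pderivs js f = foldr partial js f"

definition smooth_fun :: "(real^'d::finite \<Rightarrow> complex) \<Rightarrow> bool" where
  "smooth_fun f \<longleftrightarrow> (\<forall>js::'d list. continuous_on UNIV (pderivs js f) \<and>
      (\<forall>j x. (\<lambda>t::real. pderivs js f (x + t *\<^sub>R axis j 1)) differentiable (at 0)))"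

definition test_fun :: "(real^'d::finite \<Rightarrow> complex) \<Rightarrow> bool" where
  "test_fun \<phi> \<longleftrightarrow> smooth_fun \<phi> \<and> compact (closure {x. \<phi> x \<noteq> 0})"

definition test_conv :: "(nat \<Rightarrow> real^'d::finite \<Rightarrow> complex) \<Rightarrow> (real^'d \<Rightarrow> complex) \<Rightarrow> bool" where
  "test_conv \<phi>s \<phi> \<longleftrightarrow> (\<forall>n. test_fun (\<phi>s n)) \<and> test_fun \<phi> \<and>
     (\<exists>K. compact K \<and> (\<forall>n. {x. \<phi>s n x \<noteq> 0} \<subseteq> K)) \<and>
     (\<forall>js::'d list. uniform_limit UNIV (\<lambda>n. pderivs js (\<phi>s n)) (pderivs js \<phi>) sequentially)"

text \<open>A distribution: a (sequentially) continuous linear functional on D(R^d);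
 only its values on test functions are relevant.\<close>
definition distribution :: "((real^'d::finite \<Rightarrow> complex) \<Rightarrow> complex) \<Rightarrow> bool" where
  "distribution T \<longleftrightarrow>
     (\<forall>\<phi> \<psi> a b. test_fun \<phi> \<longrightarrow> test_fun \<psi> \<longrightarrow>
        T (\<lambda>x. a * \<phi> x + b * \<psi> x) = a * T \<phi> + b * T \<psi>) \<and>
     (\<forall>\<phi>s \<phi>. test_conv \<phi>s \<phi> \<longrightarrow> (\<lambda>n. T (\<phi>s n)) \<longlonglongrightarrow> T \<phi>)"

text \<open>Transpose of the Euler derivative theta_j = x_j d_j: psi \<mapsto> - d_j (x_j psi).\<close>
definition euler_t :: "'d::finite \<Rightarrow> (real^'d \<Rightarrow> complex) \<Rightarrow> real^'d \<Rightarrow> complex" where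
  "euler_t j \<psi> = (\<lambda>x. - partial j (\<lambda>z. complex_of_real (z $ j) * \<psi> z) x)"

text \<open>theta^js = theta_j1 o ... o theta_jm; its transpose applies the transposes in reverse order.\<close>
definition euler_transpose :: "'d::finite list \<Rightarrow> (real^'d \<Rightarrow> complex) \<Rightarrow> real^'d \<Rightarrow> complex" where
  "euler_transpose js \<psi> = foldr euler_t (rev js) \<psi>"

text \<open>O_H'(R^d): T = sum theta^beta t_beta in the distributional sense, for every k,
 with measurable t_beta such that (1+|x|^2)^(k/2) t_beta is essentially bounded.\<close>
definition OH' :: "((real^'d::finite \<Rightarrow> complex) \<Rightarrow> complex) \<Rightarrow> bool" where
  "OH' T \<longleftrightarrow> distribution T \<and>
     (\<forall>k::nat. \<exists>ts :: ('d list \<times> (real^'d \<Rightarrow> complex)) list.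
        (\<forall>(js, t) \<in> set ts. t \<in> borel_measurable lebesgue \<and>
            (\<exists>C. AE x in lebesgue. (1 + (norm x)^2) powr (real k / 2) * cmod (t x) \<le> C)) \<and>
        (\<forall>\<phi>. test_fun \<phi> \<longrightarrow>
            T \<phi> = (\<Sum>(js, t) \<leftarrow> ts. LINT x|lebesgue. t x * euler_transpose js \<phi> x)))"

end

theory Submission
  imports Defs "HOL-Probability.Sinc_Integral"
begin

abbreviation ee :: "'d::finite \<Rightarrow> real^'d" where "ee j \<equiv> axis j 1"

definition axdiff :: "(real^'d::finite \<Rightarrow> complex) \<Rightarrow> bool" where
  "axdiff f \<longleftrightarrow> (\<forall>j x. (\<lambda>t::real. f (x + t *\<^sub>R axis j 1)) differentiable (at 0))"

lemma vd_quot_iff: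
  fixes f :: "real \<Rightarrow> 'a::real_normed_vector"
  shows "(f has_vector_derivative D) (at 0) \<longleftrightarrow> ((\<lambda>t. (f t - f 0) /\<^sub>R t) \<longlongrightarrow> D) (at 0)"
proof -
  have "(f has_vector_derivative D) (at 0) \<longleftrightarrow>
     ((\<lambda>h. norm (f (0 + h) - f 0 - h *\<^sub>R D) / norm h) \<longlongrightarrow> 0) (at 0)"
    unfolding has_vector_derivative_def has_derivative_at
    by (simp add: bounded_linear_scaleR_left)
  also have "\<dots> \<longleftrightarrow> ((\<lambda>h. norm ((f h - f 0) /\<^sub>R h - D)) \<longlongrightarrow> 0) (at 0)"
  proof (rule filterlim_cong[OF refl refl])
    show "\<forall>\<^sub>F h in at 0. norm (f (0 + h) - f 0 - h *\<^sub>R D) / norm h = norm ((f h - f 0) /\<^sub>R h - D)"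
    proof (rule eventually_at_filter[THEN iffD2], intro always_eventually allI impI)
      fix h :: real assume "h \<noteq> 0"
      have "(f h - f 0) /\<^sub>R h - D = inverse h *\<^sub>R (f h - f 0 - h *\<^sub>R D)"
        using \<open>h \<noteq> 0\<close> by (simp add: scaleR_diff_right)
      then show "norm (f (0 + h) - f 0 - h *\<^sub>R D) / norm h = norm ((f h - f 0) /\<^sub>R h - D)"
        by (simp add: divide_inverse abs_inverse mult.commute)
    qed
  qed
  also have "\<dots> \<longleftrightarrow> ((\<lambda>t. (f t - f 0) /\<^sub>R t) \<longlongrightarrow> D) (at 0)"
    by (simp add: tendsto_norm_zero_iff LIM_zero_iff)
  finally show ?thesis .
qed

lemma pderivs_Nil[simp]: "pderivs [] f = f"
  by (simp add: pderivs_def)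

lemma pderivs_snoc: "pderivs (js @ [j]) f = pderivs js (partial j f)"
  by (simp add: pderivs_def)

lemma pderivs_Cons: "pderivs (j # js) f = partial j (pderivs js f)"
  by (simp add: pderivs_def)

lemma smooth_coinduct:
  assumes "f \<in> S"
    and step: "\<And>g. g \<in> S \<Longrightarrow> continuous_on UNIV g \<and> axdiff g \<and> (\<forall>j. partial j g \<in> S)"
  shows "smooth_fun f"
proof -
  have "\<forall>g\<in>S. pderivs js g \<in> S" for js
  proof (induction js rule: rev_induct)
    case Nil then show ?case by simp
  next
    case (snoc j js)
    then show ?case using step by (simp add: pderivs_snoc)
  qed
  then show ?thesis
    using assms unfolding smooth_fun_def axdiff_def by blast
qed

lemma smooth_cont: "smooth_fun f \<Longrightarrow> continuous_on UNIV f"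
  unfolding smooth_fun_def by (metis pderivs_Nil)

lemma smooth_axdiff: "smooth_fun f \<Longrightarrow> axdiff f"
  unfolding smooth_fun_def axdiff_def by (metis pderivs_Nil)

lemma smooth_partial: "smooth_fun f \<Longrightarrow> smooth_fun (partial j f)"
  unfolding smooth_fun_def by (metis pderivs_snoc)

lemma smooth_pderivs: "smooth_fun f \<Longrightarrow> smooth_fun (pderivs js f)"
  by (induction js) (auto simp: pderivs_Cons smooth_partial)

lemma smooth_coinduct2:
  assumes "f \<in> S"
    and step: "\<And>g. g \<in> S \<Longrightarrow> continuous_on UNIV g \<and> axdiff g \<and> (\<forall>j. partial j g \<in> S \<or> smooth_fun (partial j g))"
  shows "smooth_fun f"
  apply (rule smooth_coinduct[of f "S \<union> Collect smooth_fun"])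
  using assms smooth_cont smooth_axdiff smooth_partial by blast+

lemma partial_eqI:
  "((\<lambda>t. f (x + t *\<^sub>R axis j 1)) has_vector_derivative D) (at 0) \<Longrightarrow> partial j f x = D"
  unfolding partial_def by (rule vector_derivative_at)

lemma axdiff_hvd:
  "axdiff f \<Longrightarrow> ((\<lambda>t. f (x + t *\<^sub>R axis j 1)) has_vector_derivative partial j f x) (at 0)"
  unfolding axdiff_def partial_def using vector_derivative_works by blast

lemma axdiff_hvd_at:
  assumes "axdiff f"
  shows "((\<lambda>t. f (x + t *\<^sub>R axis j 1)) has_vector_derivative partial j f (x + s *\<^sub>R axis j 1)) (at s)"
proof -
  have h: "((\<lambda>u. f ((x + s *\<^sub>R axis j 1) + u *\<^sub>R axis j 1)) has_vector_derivative partial j f (x + s *\<^sub>R axis j 1)) (at ((\<lambda>t. t - s) s))"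
    using axdiff_hvd[OF assms] by simp
  have d: "((\<lambda>t::real. t - s) has_vector_derivative 1) (at s)"
    by (auto intro!: derivative_eq_intros)
  have "((\<lambda>u. f ((x + s *\<^sub>R axis j 1) + u *\<^sub>R axis j 1)) \<circ> (\<lambda>t. t - s) has_vector_derivative 1 *\<^sub>R partial j f (x + s *\<^sub>R axis j 1)) (at s)"
    by (rule vector_diff_chain_at[OF d h])
  moreover have "(\<lambda>u. f ((x + s *\<^sub>R axis j 1) + u *\<^sub>R axis j 1)) \<circ> (\<lambda>t. t - s) = (\<lambda>t. f (x + t *\<^sub>R axis j 1))"
    by (auto simp: fun_eq_iff algebra_simps)
  ultimately show ?thesis by simp
qed

lemma smooth_const0: "smooth_fun (\<lambda>x. 0)"
proof (rule smooth_coinduct[of _ "{\<lambda>x. 0}"])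
  fix g :: "real^'a \<Rightarrow> complex" assume "g \<in> {\<lambda>x. 0}"
  then have g: "g = (\<lambda>x. 0)" by simp
  have "partial j g = (\<lambda>x. 0)" for j
    unfolding g by (rule ext, rule partial_eqI) simp
  then show "continuous_on UNIV g \<and> axdiff g \<and> (\<forall>j. partial j g \<in> {\<lambda>x. 0})"
    by (simp add: g axdiff_def)
qed simp

lemma partial_lin:
  assumes "axdiff f" "axdiff g"
  shows "partial j (\<lambda>x. a * f x + b * g x) = (\<lambda>x. a * partial j f x + b * partial j g x)"
  by (rule ext, rule partial_eqI)
     (auto intro!: derivative_eq_intros axdiff_hvd assms)

lemma axdiff_lin:
  assumes "axdiff f" "axdiff g"
  shows "axdiff (\<lambda>x. a * f x + b * g x)"
  unfolding axdiff_def
  by (auto intro!: differentiableI_vector derivative_eq_intros axdiff_hvd assms)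

lemma smooth_lin:
  assumes "smooth_fun f" "smooth_fun g"
  shows "smooth_fun (\<lambda>x. a * f x + b * g x)"
proof (rule smooth_coinduct[of _ "{h. \<exists>a b f g. smooth_fun f \<and> smooth_fun g \<and> h = (\<lambda>x. a * f x + b * g x)}"])
  show "(\<lambda>x. a * f x + b * g x) \<in> {h. \<exists>a b f g. smooth_fun f \<and> smooth_fun g \<and> h = (\<lambda>x. a * f x + b * g x)}"
    using assms by blast
next
  fix h assume "h \<in> {h. \<exists>a b f g. smooth_fun f \<and> smooth_fun g \<and> h = (\<lambda>x. a * f x + b * g x)}"
  then obtain a b f g where fg: "smooth_fun f" "smooth_fun g" and h: "h = (\<lambda>x. a * f x + b * g x)" by blast
  have "continuous_on UNIV h"
    unfolding h using smooth_cont[OF fg(1)] smooth_cont[OF fg(2)] by (intro continuous_intros)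
  moreover have "axdiff h" unfolding h using fg by (intro axdiff_lin smooth_axdiff)
  moreover have "partial j h = (\<lambda>x. a * partial j f x + b * partial j g x)" for j
    unfolding h using fg by (intro partial_lin smooth_axdiff)
  ultimately show "continuous_on UNIV h \<and> axdiff h \<and> (\<forall>j. partial j h \<in> {h. \<exists>a b f g. smooth_fun f \<and> smooth_fun g \<and> h = (\<lambda>x. a * f x + b * g x)})"
    using fg smooth_partial by blast
qed

lemma smooth_cmul: "smooth_fun f \<Longrightarrow> smooth_fun (\<lambda>x. c * f x)"
  using smooth_lin[of f f c 0] by simp

lemma smooth_add: "smooth_fun f \<Longrightarrow> smooth_fun g \<Longrightarrow> smooth_fun (\<lambda>x. f x + g x)"
  using smooth_lin[of f g 1 1] by simp

lemma smooth_neg: "smooth_fun f \<Longrightarrow> smooth_fun (\<lambda>x. - f x)"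
  using smooth_cmul[of f "-1"] by simp

lemma coord_shift: "(x + t *\<^sub>R axis j 1) $ k = x $ k + (if j = k then t else 0)"
  by (simp add: axis_def)

lemma hvd_coord_mult:
  assumes "axdiff f"
  shows "((\<lambda>t. of_real ((x + t *\<^sub>R axis j 1) $ k) * f (x + t *\<^sub>R axis j 1)) has_vector_derivative
     (of_real (x $ k) * partial j f x + (if j = k then f x else 0))) (at 0)"
proof -
  have c: "((\<lambda>t. of_real ((x + t *\<^sub>R axis j 1) $ k) :: complex) has_vector_derivative (if j = k then 1 else 0)) (at 0)"
    unfolding coord_shift by (cases "j = k") (auto intro!: derivative_eq_intros)
  have R: "((\<lambda>t. of_real ((x + t *\<^sub>R axis j 1) $ k) * f (x + t *\<^sub>R axis j 1)) has_vector_derivative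
     (of_real ((x + 0 *\<^sub>R axis j 1) $ k) * partial j f x + (if j = k then 1 else 0) * f (x + 0 *\<^sub>R axis j 1))) (at 0)"
    by (rule has_vector_derivative_mult[OF c axdiff_hvd[OF assms]])
  have eq1: "x + 0 *\<^sub>R axis j 1 = x" by simp
  have eq2: "(if j = k then 1 else 0) * f x = (if j = k then f x else 0)" by simp
  from R show ?thesis by (simp only: eq1 eq2)
qed

lemma partial_coord_mult:
  assumes "axdiff f"
  shows "partial j (\<lambda>z. of_real (z $ k) * f z) = (\<lambda>x. of_real (x $ k) * partial j f x + (if j = k then f x else 0))"
  by (rule ext, rule partial_eqI, rule hvd_coord_mult[OF assms])

lemma axdiff_coord_mult:
  assumes "axdiff f"
  shows "axdiff (\<lambda>z. of_real (z $ k) * f z)"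
  unfolding axdiff_def using hvd_coord_mult[OF assms] differentiableI_vector by blast

lemma smooth_coord_mult:
  assumes "smooth_fun g"
  shows "smooth_fun (\<lambda>x. of_real (x $ k) * g x)"
proof (rule smooth_coinduct[of _ "{h. \<exists>f g. smooth_fun f \<and> smooth_fun g \<and> h = (\<lambda>x. f x + of_real (x $ k) * g x)}"])
  show "(\<lambda>x. of_real (x $ k) * g x) \<in> {h. \<exists>f g. smooth_fun f \<and> smooth_fun g \<and> h = (\<lambda>x. f x + of_real (x $ k) * g x)}"
    using assms smooth_const0 by (intro CollectI exI[of _ "\<lambda>x. 0"] exI[of _ g]) auto
next
  fix h assume "h \<in> {h. \<exists>f g. smooth_fun f \<and> smooth_fun g \<and> h = (\<lambda>x. f x + of_real (x $ k) * g x)}"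
  then obtain f g where fg: "smooth_fun f" "smooth_fun g" and h: "h = (\<lambda>x. f x + of_real (x $ k) * g x)" by blast
  have "continuous_on UNIV h"
    unfolding h using smooth_cont[OF fg(1)] smooth_cont[OF fg(2)] by (intro continuous_intros)
  moreover have ax: "axdiff (\<lambda>x. of_real (x $ k) * g x)"
    by (rule axdiff_coord_mult[OF smooth_axdiff[OF fg(2)]])
  moreover have "axdiff h"
    unfolding h using axdiff_lin[OF smooth_axdiff[OF fg(1)] ax, of 1 1] by simp
  moreover have peq: "partial j h = (\<lambda>x. (partial j f x + (if j = k then 1 else 0) * g x) + of_real (x $ k) * partial j g x)" for j
  proof -
    have "partial j h = (\<lambda>x. 1 * partial j f x + 1 * partial j (\<lambda>x. of_real (x $ k) * g x) x)"
      unfolding h using partial_lin[OF smooth_axdiff[OF fg(1)] ax, of j 1 1] by simp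
    then show ?thesis
      by (simp add: partial_coord_mult[OF smooth_axdiff[OF fg(2)]] fun_eq_iff)
  qed
  moreover have sm: "smooth_fun (\<lambda>x. partial j f x + (if j = k then 1 else 0) * g x)" for j
    using smooth_lin[OF smooth_partial[OF fg(1), of j] fg(2), of 1 "if j = k then 1 else 0"] by simp
  moreover have "partial j h \<in> {h. \<exists>f g. smooth_fun f \<and> smooth_fun g \<and> h = (\<lambda>x. f x + of_real (x $ k) * g x)}" for j
    unfolding peq
    apply (rule CollectI, rule exI[of _ "\<lambda>x. partial j f x + (if j = k then 1 else 0) * g x"], rule exI[of _ "partial j g"])
    using sm[of j] smooth_partial[OF fg(2), of j] by simp
  ultimately show "continuous_on UNIV h \<and> axdiff h \<and> (\<forall>j. partial j h \<in> {h. \<exists>f g. smooth_fun f \<and> smooth_fun g \<and> h = (\<lambda>x. f x + of_real (x $ k) * g x)})"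
    by blast
qed

lemma euler_t_eq:
  assumes "axdiff f"
  shows "euler_t j f = (\<lambda>x. - (of_real (x $ j) * partial j f x + f x))"
  unfolding euler_t_def partial_coord_mult[OF assms] by simp

lemma smooth_euler_t:
  assumes "smooth_fun f" shows "smooth_fun (euler_t j f)"
proof -
  have "smooth_fun (\<lambda>x. - (of_real (x $ j) * partial j f x + f x))"
    by (intro smooth_neg smooth_add smooth_coord_mult smooth_partial assms)
  then show ?thesis by (simp only: euler_t_eq[OF smooth_axdiff[OF assms]])
qed

lemma mult_shift: "(x + t *\<^sub>R axis j 1) * y = x * y + (t * y $ j) *\<^sub>R axis j (1::real)"
  by (simp add: vec_eq_iff axis_def algebra_simps)

lemma hvd_dil:
  assumes "axdiff f"
  shows "((\<lambda>t. f ((x + t *\<^sub>R axis j 1) * y)) has_vector_derivative of_real (y $ j) * partial j f (x * y)) (at 0)"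
proof -
  have d: "((\<lambda>t::real. t * y $ j) has_vector_derivative y $ j) (at 0)"
    by (auto intro!: derivative_eq_intros)
  have h: "((\<lambda>u. f (x * y + u *\<^sub>R axis j 1)) has_vector_derivative partial j f (x * y)) (at ((\<lambda>t. t * y $ j) 0))"
    using axdiff_hvd[OF assms] by simp
  have e: "(\<lambda>u. f (x * y + u *\<^sub>R axis j 1)) \<circ> (\<lambda>t. t * y $ j) = (\<lambda>t. f ((x + t *\<^sub>R axis j 1) * y))"
    by (rule ext) (simp only: o_def mult_shift)
  have e2: "(y $ j) *\<^sub>R partial j f (x * y) = of_real (y $ j) * partial j f (x * y)"
    by (simp add: scaleR_conv_of_real)
  from vector_diff_chain_at[OF d h] show ?thesis
    by (simp only: e e2)
qed

lemma partial_dil: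
  assumes "axdiff f"
  shows "partial j (\<lambda>x. f (x * y)) = (\<lambda>x. of_real (y $ j) * partial j f (x * y))"
  by (rule ext, rule partial_eqI, rule hvd_dil[OF assms])

lemma cont_mult_vec: "continuous_on UNIV (\<lambda>x::real^'d. x * y)"
proof -
  have e: "(\<lambda>x::real^'d. x * y) = (\<lambda>x. \<chi> i. x $ i * y $ i)" by (simp add: vec_eq_iff fun_eq_iff)
  show ?thesis unfolding e by (intro continuous_intros)
qed

lemma smooth_dil:
  assumes "smooth_fun g"
  shows "smooth_fun (\<lambda>x. g (x * y))"
proof (rule smooth_coinduct[of _ "{h. \<exists>f. smooth_fun f \<and> h = (\<lambda>x. f (x * y))}"])
  fix h assume "h \<in> {h. \<exists>f. smooth_fun f \<and> h = (\<lambda>x. f (x * y))}"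
  then obtain f where f: "smooth_fun f" and h: "h = (\<lambda>x. f (x * y))" by blast
  have "continuous_on UNIV h"
    unfolding h by (rule continuous_on_compose2[OF smooth_cont[OF f] cont_mult_vec]) auto
  moreover have "axdiff h"
    unfolding h axdiff_def by (intro allI differentiableI_vector[OF hvd_dil[OF smooth_axdiff[OF f]]])
  moreover have "partial j h \<in> {h. \<exists>f. smooth_fun f \<and> h = (\<lambda>x. f (x * y))}" for j
    unfolding h partial_dil[OF smooth_axdiff[OF f]]
    apply (rule CollectI, rule exI[of _ "\<lambda>z. of_real (y $ j) * partial j f z"])
    using smooth_cmul[OF smooth_partial[OF f, of j], of "of_real (y $ j)"] by simp
  ultimately show "continuous_on UNIV h \<and> axdiff h \<and> (\<forall>j. partial j h \<in> {h. \<exists>f. smooth_fun f \<and> h = (\<lambda>x. f (x * y))})"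
    by blast
next
  show "(\<lambda>x. g (x * y)) \<in> {h. \<exists>f. smooth_fun f \<and> h = (\<lambda>x. f (x * y))}"
    using assms by blast
qed



lemma test_fun_iff: "test_fun f \<longleftrightarrow> smooth_fun f \<and> bounded {x. f x \<noteq> 0}"
  unfolding test_fun_def by simp

lemma partial_zero_open:
  assumes "open U" "x \<in> U" "\<And>z. z \<in> U \<Longrightarrow> f z = 0"
  shows "partial j f x = 0"
proof (rule partial_eqI)
  let ?S = "{t::real. x + t *\<^sub>R axis j 1 \<in> U}"
  have e: "?S = (\<lambda>t. x + t *\<^sub>R axis j 1) -` U" by auto
  have "open ?S" unfolding e
    by (rule continuous_open_vimage[OF assms(1)]) (intro continuous_intros)
  moreover have "0 \<in> ?S" using assms by simp
  ultimately show "((\<lambda>t. f (x + t *\<^sub>R axis j 1)) has_vector_derivative 0) (at 0)"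
    by (rule has_vector_derivative_transform_within_open[OF has_vector_derivative_const]) (use assms in auto)
qed

lemma notin_closure_zero: "x \<notin> closure {z. f z \<noteq> 0} \<Longrightarrow> f x = 0"
  using closure_subset[of "{z. f z \<noteq> 0}"] by auto

lemma pderivs_zero_outside:
  assumes "x \<notin> closure {z. f z \<noteq> 0}"
  shows "pderivs js f x = 0"
  using assms
proof (induction js arbitrary: x)
  case Nil
  then show ?case using notin_closure_zero[OF Nil] by simp
next
  case (Cons j js)
  show ?case unfolding pderivs_Cons
    by (rule partial_zero_open[of "- closure {z. f z \<noteq> 0}"]) (use Cons in auto)
qed

lemma partial_zero_outside:
  assumes "x \<notin> closure {z. f z \<noteq> 0}"
  shows "partial j f x = 0"
  using pderivs_zero_outside[OF assms, of "[j]"] by (simp add: pderivs_Cons)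

lemma bounded_support_closure:
  assumes "bounded {x. f x \<noteq> 0}" "\<And>x. x \<notin> closure {z. f z \<noteq> 0} \<Longrightarrow> g x = 0"
  shows "bounded {x. g x \<noteq> 0}"
  by (rule bounded_subset[OF bounded_closure[OF assms(1)]]) (use assms(2) in blast)

lemma test_fun_partial:
  assumes "test_fun f" shows "test_fun (partial j f)"
proof -
  have sm: "smooth_fun f" "bounded {x. f x \<noteq> 0}" using assms test_fun_iff by auto
  show ?thesis unfolding test_fun_iff
    by (intro conjI smooth_partial[OF sm(1)] bounded_support_closure[OF sm(2) partial_zero_outside])
qed

lemma test_fun_pderivs:
  assumes "test_fun f" shows "test_fun (pderivs js f)"
proof -
  have sm: "smooth_fun f" "bounded {x. f x \<noteq> 0}" using assms test_fun_iff by auto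
  show ?thesis unfolding test_fun_iff
    by (intro conjI smooth_pderivs[OF sm(1)] bounded_support_closure[OF sm(2) pderivs_zero_outside])
qed

lemma test_fun_euler_t:
  assumes "test_fun f" shows "test_fun (euler_t j f)"
proof -
  have sm: "smooth_fun f" "bounded {x. f x \<noteq> 0}" using assms test_fun_iff by auto
  have "euler_t j f x = 0" if "x \<notin> closure {z. f z \<noteq> 0}" for x
  proof -
    have "f x = 0" using that by (rule notin_closure_zero)
    then show ?thesis
      using partial_zero_outside[OF that] by (simp add: euler_t_eq[OF smooth_axdiff[OF sm(1)]])
  qed
  then show ?thesis
    unfolding test_fun_iff using smooth_euler_t[OF sm(1)] bounded_support_closure[OF sm(2)] by blast
qed

lemma test_fun_foldr_euler: "test_fun f \<Longrightarrow> test_fun (foldr euler_t ls f)"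
  by (induction ls) (auto intro: test_fun_euler_t)

lemma test_fun_euler_transpose: "test_fun f \<Longrightarrow> test_fun (euler_transpose js f)"
  unfolding euler_transpose_def by (rule test_fun_foldr_euler)

lemma euler_t_dil:
  assumes "smooth_fun f"
  shows "euler_t j (\<lambda>x. f (x * y)) = (\<lambda>x. euler_t j f (x * y))"
proof -
  have "euler_t j (\<lambda>x. f (x * y)) = (\<lambda>x. - (of_real (x $ j) * partial j (\<lambda>x. f (x * y)) x + f (x * y)))"
    by (rule euler_t_eq[OF smooth_axdiff[OF smooth_dil[OF assms]]])
  also have "\<dots> = (\<lambda>x. - (of_real (x $ j) * (of_real (y $ j) * partial j f (x * y)) + f (x * y)))"
    by (simp only: partial_dil[OF smooth_axdiff[OF assms]])
  also have "\<dots> = (\<lambda>x. euler_t j f (x * y))"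
    by (simp add: euler_t_eq[OF smooth_axdiff[OF assms]] fun_eq_iff)
  finally show ?thesis .
qed

lemma foldr_euler_dil:
  assumes "smooth_fun f"
  shows "foldr euler_t ls (\<lambda>x. f (x * y)) = (\<lambda>x. foldr euler_t ls f (x * y)) \<and> smooth_fun (foldr euler_t ls f)"
proof (induction ls)
  case Nil then show ?case using assms by simp
next
  case (Cons j ls)
  then show ?case by (simp add: euler_t_dil smooth_euler_t)
qed

lemma euler_transpose_dil:
  assumes "smooth_fun f"
  shows "euler_transpose js (\<lambda>x. f (x * y)) = (\<lambda>x. euler_transpose js f (x * y))"
  unfolding euler_transpose_def using foldr_euler_dil[OF assms] by blast

lemma test_fun_dil:
  assumes "test_fun f" "\<forall>i. y $ i \<noteq> 0"
  shows "test_fun (\<lambda>x. f (x * y))"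
proof -
  have sm: "smooth_fun f" "bounded {x. f x \<noteq> 0}" using assms test_fun_iff by auto
  define yi :: "real^'a" where "yi = (\<chi> i. 1 / y $ i)"
  have inv: "x * y * yi = x" for x using assms(2) by (simp add: vec_eq_iff yi_def)
  have "{x. f (x * y) \<noteq> 0} \<subseteq> (\<lambda>z. z * yi) ` {x. f x \<noteq> 0}"
  proof
    fix x assume "x \<in> {x. f (x * y) \<noteq> 0}"
    then show "x \<in> (\<lambda>z. z * yi) ` {x. f x \<noteq> 0}"
      using inv[of x] by (intro image_eqI[of _ _ "x * y"]) auto
  qed
  moreover have "bounded ((\<lambda>z. z * yi) ` closure {x. f x \<noteq> 0})"
    by (rule compact_imp_bounded, rule compact_continuous_image[OF continuous_on_subset[OF cont_mult_vec subset_UNIV]])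
       (use sm(2) in simp)
  ultimately have "bounded {x. f (x * y) \<noteq> 0}"
    using bounded_subset closure_subset by (smt (verit, ccfv_threshold) image_mono subset_trans)
  then show ?thesis
    unfolding test_fun_iff using smooth_dil[OF sm(1)] by blast
qed

lemma bounded_fun:
  assumes "test_fun f" shows "\<exists>B. \<forall>x. cmod (f x) \<le> B"
proof -
  have sm: "smooth_fun f" "bounded {x. f x \<noteq> 0}" using assms test_fun_iff by auto
  have "compact (f ` closure {x. f x \<noteq> 0})"
    by (rule compact_continuous_image) (use smooth_cont[OF sm(1)] continuous_on_subset sm(2) in auto)
  then obtain B where B: "\<And>z. z \<in> f ` closure {x. f x \<noteq> 0} \<Longrightarrow> norm z \<le> B"
    using compact_imp_bounded bounded_iff by metis
  have "cmod (f x) \<le> max B 0" for x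
  proof (cases "x \<in> closure {x. f x \<noteq> 0}")
    case True then show ?thesis using B[OF imageI[OF True]] by simp
  next
    case False then have "f x = 0" by (rule notin_closure_zero)
    then show ?thesis by simp
  qed
  then show ?thesis by blast
qed



definition decay :: "(real^'d::finite \<Rightarrow> complex) \<Rightarrow> real \<Rightarrow> bool" where
  "decay w s \<longleftrightarrow> w \<in> borel_measurable lebesgue \<and>
     (\<exists>C. AE x in lebesgue. (1 + (norm x)^2) powr (s / 2) * cmod (w x) \<le> C)"

definition rho :: "real^'d::finite \<Rightarrow> real" where
  "rho x = (\<Prod>b\<in>Basis. inverse (1 + (x \<bullet> b)^2))"

lemma cont_meas: "continuous_on UNIV f \<Longrightarrow> f \<in> borel_measurable lebesgue"
  by (intro measurable_completion) (simp add: borel_measurable_continuous_onI)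

lemma rho_cont: "continuous_on UNIV rho"
  unfolding rho_def by (intro continuous_intros) (smt (verit) zero_le_power2)

lemma rho_nonneg: "0 \<le> rho x"
  unfolding rho_def by (intro prod_nonneg) (auto intro: add_pos_nonneg)

lemma rho_integrable_lborel: "integrable lborel (rho :: real^'a::finite \<Rightarrow> real)"
proof (rule integrableI_nonneg)
  show "rho \<in> borel_measurable lborel"
    by simp (rule borel_measurable_continuous_onI[OF rho_cont])
  show "AE x in lborel. 0 \<le> rho x" by (simp add: rho_nonneg)
  have i1: "integrable lborel (\<lambda>t::real. inverse (1 + t^2))"
    using integrable_inverse_1_plus_square by (simp add: set_integrable_def einterval_eq_UNIV)
  have fin: "(\<integral>\<^sup>+t. ennreal (inverse (1 + (t::real)^2)) \<partial>lborel) < \<infinity>"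
  proof -
    have "(\<integral>\<^sup>+t. ennreal (norm (inverse (1 + (t::real)^2))) \<partial>lborel) < \<infinity>"
      using i1[unfolded integrable_iff_bounded] by (rule conjunct2)
    moreover have "\<And>t::real. norm (inverse (1 + t^2)) = inverse (1 + t^2)"
      by (smt (verit) zero_le_power2 inverse_nonnegative_iff_nonnegative real_norm_def)
    ultimately show ?thesis by simp
  qed
  have "(\<integral>\<^sup>+x. ennreal (rho (x::real^'a)) \<partial>lborel) = (\<integral>\<^sup>+x. (\<Prod>b\<in>Basis. ennreal (inverse (1 + ((x::real^'a) \<bullet> b)^2))) \<partial>lborel)"
  proof -
    have e: "ennreal (\<Prod>b\<in>Basis. inverse (1 + ((x::real^'a) \<bullet> b)^2)) = (\<Prod>b\<in>Basis. ennreal (inverse (1 + (x \<bullet> b)^2)))" for x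
      by (rule prod_ennreal[symmetric]) (smt (verit) zero_le_power2 inverse_nonnegative_iff_nonnegative)
    show ?thesis unfolding rho_def e ..
  qed
  also have "\<dots> = (\<Prod>b\<in>(Basis :: (real^'a) set). (\<integral>\<^sup>+t. ennreal (inverse (1 + t^2)) \<partial>lborel))"
    by (rule nn_integral_lborel_prod) auto
  also have "\<dots> < \<infinity>"
    using fin by (simp add: power_less_top_ennreal)
  finally show "(\<integral>\<^sup>+x. ennreal (rho (x::real^'a)) \<partial>lborel) < \<infinity>" .
qed

lemma rho_integrable: "integrable lebesgue (rho :: real^'d::finite \<Rightarrow> real)"
  using rho_integrable_lborel rho_cont
  by (subst integrable_completion) (auto simp: borel_measurable_continuous_onI)

lemma prod_le_powr:
  fixes x :: "real^'d::finite"
  assumes "s \<ge> 2 * real CARD('d)"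
  shows "(\<Prod>b\<in>Basis. (1 + (x \<bullet> b)^2)) \<le> (1 + (norm x)^2) powr (s / 2)"
proof -
  have "(\<Prod>b\<in>(Basis::(real^'d) set). (1 + (x \<bullet> b)^2)) \<le> (\<Prod>b\<in>(Basis::(real^'d) set). (1 + (norm x)^2))"
  proof (rule prod_mono)
    fix b :: "real^'d" assume "b \<in> Basis"
    then have "\<bar>x \<bullet> b\<bar> \<le> norm x" by (rule Basis_le_norm)
    then have "(x \<bullet> b)^2 \<le> (norm x)^2"
      by (metis abs_ge_zero power2_abs power_mono)
    then show "0 \<le> 1 + (x \<bullet> b)^2 \<and> 1 + (x \<bullet> b)^2 \<le> 1 + (norm x)^2"
      by (simp add: add_nonneg_nonneg)
  qed
  also have "\<dots> = (1 + (norm x)^2) ^ CARD('d)"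
    by simp
  also have "\<dots> = (1 + (norm x)^2) powr (real CARD('d))"
    by (simp add: powr_realpow add_pos_nonneg)
  also have "\<dots> \<le> (1 + (norm x)^2) powr (s / 2)"
    by (rule powr_mono) (use assms in auto)
  finally show ?thesis .
qed

lemma decay_bound_rho:
  fixes w :: "real^'d::finite \<Rightarrow> complex"
  assumes "decay w s" "s \<ge> 2 * real CARD('d)"
  shows "\<exists>C. AE x in lebesgue. cmod (w x) \<le> C * rho x"
proof -
  obtain C where C: "AE x in lebesgue. (1 + (norm x)^2) powr (s / 2) * cmod (w x) \<le> C"
    using assms(1) unfolding decay_def by blast
  have "AE x in lebesgue. cmod (w x) \<le> C * rho x"
    using C
  proof eventually_elim
    case (elim x)
    let ?P = "\<Prod>b\<in>(Basis::(real^'d) set). (1 + (x \<bullet> b)^2)"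
    let ?Q = "(1 + (norm x)^2) powr (s / 2)"
    have Ppos: "0 < ?P" by (intro prod_pos) (auto intro: add_pos_nonneg)
    have PQ: "?P \<le> ?Q" by (rule prod_le_powr[OF assms(2)])
    have Qpos: "0 < ?Q" using Ppos PQ by linarith
    have C0: "0 \<le> C" using elim Qpos by (smt (verit) mult_nonneg_nonneg norm_ge_zero)
    have "cmod (w x) \<le> C / ?Q" using elim Qpos by (simp add: field_simps)
    also have "\<dots> \<le> C / ?P" by (rule divide_left_mono[OF PQ C0]) (use Ppos Qpos in simp)
    also have "\<dots> = C * rho x"
      unfolding rho_def by (simp add: prod_inversef[symmetric] divide_inverse)
    finally show ?case .
  qed
  then show ?thesis by blast
qed

lemma decay_integrable_mult:
  fixes w :: "real^'d::finite \<Rightarrow> complex"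
  assumes "decay w s" "s \<ge> 2 * real CARD('d)"
    and g: "g \<in> borel_measurable lebesgue" "\<And>x. cmod (g x) \<le> B"
  shows "integrable lebesgue (\<lambda>x. w x * g x)"
proof -
  obtain C where C: "AE x in lebesgue. cmod (w x) \<le> C * rho x"
    using decay_bound_rho[OF assms(1,2)] by blast
  have B0: "0 \<le> B" using g(2)[of 0] norm_ge_zero order_trans by blast
  have I: "integrable lebesgue (\<lambda>x. (B * C) * rho x)"
    using rho_integrable by (rule integrable_mult_right)
  show ?thesis
  proof (rule Bochner_Integration.integrable_bound[OF I])
    show "(\<lambda>x. w x * g x) \<in> borel_measurable lebesgue"
    proof -
      have [measurable]: "w \<in> borel_measurable lebesgue" "g \<in> borel_measurable lebesgue"
        using assms(1) g(1) unfolding decay_def by auto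
      show ?thesis by measurable
    qed
    show "AE x in lebesgue. norm (w x * g x) \<le> norm ((B * C) * rho x)"
      using C
    proof eventually_elim
      case (elim x)
      have "norm (w x * g x) = cmod (w x) * cmod (g x)" by (simp add: norm_mult)
      also have "\<dots> \<le> (C * rho x) * B"
        by (rule mult_mono[OF elim g(2) order_trans[OF norm_ge_zero elim]]) simp
      also have "\<dots> \<le> norm ((B * C) * rho x)" by (simp add: algebra_simps)
      finally show ?case .
    qed
  qed
qed

definition JJ :: "(real^'d::finite \<Rightarrow> complex) \<Rightarrow> (real^'d \<Rightarrow> complex) \<Rightarrow> real^'d \<Rightarrow> complex" where
  "JJ w \<psi> y = (LINT x|lebesgue. w x * \<psi> (x * y))"

lemma seq_cont: "continuous_on UNIV g \<Longrightarrow> u \<longlonglongrightarrow> a \<Longrightarrow> (\<lambda>n. g (u n)) \<longlonglongrightarrow> g a"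
  by (rule continuous_on_tendsto_compose[of UNIV]) auto

lemma test_cont: "test_fun f \<Longrightarrow> continuous_on UNIV f"
  by (simp add: test_fun_iff smooth_cont)

lemma meas_dil: "test_fun f \<Longrightarrow> (\<lambda>x. f (x * y)) \<in> borel_measurable lebesgue"
  by (rule cont_meas, rule continuous_on_compose2[OF test_cont cont_mult_vec]) auto

lemma decay_meas: "decay w s \<Longrightarrow> w \<in> borel_measurable lebesgue"
  by (simp add: decay_def)

lemma meas_mult:
  fixes f g :: "real^'d::finite \<Rightarrow> complex"
  assumes "f \<in> borel_measurable lebesgue" "g \<in> borel_measurable lebesgue"
  shows "(\<lambda>x. f x * g x) \<in> borel_measurable lebesgue"
proof -
  have [measurable]: "f \<in> borel_measurable lebesgue" "g \<in> borel_measurable lebesgue" using assms by auto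
  show ?thesis by measurable
qed

lemma JJ_integrable:
  assumes "decay w s" "s \<ge> 2 * real CARD('d::finite)" "test_fun (\<psi> :: real^'d \<Rightarrow> complex)"
  shows "integrable lebesgue (\<lambda>x. w x * \<psi> (x * y))"
proof -
  obtain B where B: "\<And>x. cmod (\<psi> x) \<le> B" using bounded_fun[OF assms(3)] by blast
  show ?thesis
    by (rule decay_integrable_mult[OF assms(1,2) meas_dil[OF assms(3)]]) (rule B)
qed

lemma JJ_cont:
  fixes w :: "real^'d::finite \<Rightarrow> complex"
  assumes "decay w s" "s \<ge> 2 * real CARD('d)" "test_fun \<psi>"
  shows "continuous_on UNIV (JJ w \<psi>)"
proof (rule continuous_on_sequentiallyI)
  fix u a assume u: "u \<longlonglongrightarrow> (a::real^'d)"
  obtain B where B: "\<And>x. cmod (\<psi> x) \<le> B" using bounded_fun[OF assms(3)] by blast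
  obtain C where C: "AE x in lebesgue. cmod (w x) \<le> C * rho x"
    using decay_bound_rho[OF assms(1,2)] by blast
  have wm: "w \<in> borel_measurable lebesgue" using assms(1) by (rule decay_meas)
  show "(\<lambda>n. JJ w \<psi> (u n)) \<longlonglongrightarrow> JJ w \<psi> a"
    unfolding JJ_def
  proof (rule integral_dominated_convergence[where w="\<lambda>x. (C * rho x) * B"])
    show "(\<lambda>x. w x * \<psi> (x * a)) \<in> borel_measurable lebesgue"
      by (rule meas_mult[OF wm meas_dil[OF assms(3)]])
    show "(\<lambda>x. w x * \<psi> (x * u i)) \<in> borel_measurable lebesgue" for i
      by (rule meas_mult[OF wm meas_dil[OF assms(3)]])
    show "integrable lebesgue (\<lambda>x. (C * rho x) * B)"
      using rho_integrable[THEN integrable_mult_right, of C, THEN integrable_mult_left, of B] by simp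
    show "AE x in lebesgue. (\<lambda>i. w x * \<psi> (x * u i)) \<longlonglongrightarrow> w x * \<psi> (x * a)"
    proof (rule AE_I2)
      fix x :: "real^'d"
      have "(\<lambda>i. u i * x) \<longlonglongrightarrow> a * x" by (rule seq_cont[OF cont_mult_vec u])
      then have "(\<lambda>i. x * u i) \<longlonglongrightarrow> x * a" by (simp add: mult.commute)
      then have "(\<lambda>i. \<psi> (x * u i)) \<longlonglongrightarrow> \<psi> (x * a)" by (rule seq_cont[OF test_cont[OF assms(3)]])
      then show "(\<lambda>i. w x * \<psi> (x * u i)) \<longlonglongrightarrow> w x * \<psi> (x * a)" by (rule tendsto_mult_left)
    qed
    show "AE x in lebesgue. norm (w x * \<psi> (x * u i)) \<le> (C * rho x) * B" for i
      using C
    proof eventually_elim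
      case (elim x)
      have "norm (w x * \<psi> (x * u i)) = cmod (w x) * cmod (\<psi> (x * u i))" by (simp add: norm_mult)
      also have "\<dots> \<le> (C * rho x) * B"
        by (rule mult_mono[OF elim B order_trans[OF norm_ge_zero elim]]) simp
      finally show ?case .
    qed
  qed
qed

lemma decay_coord:
  fixes w :: "real^'d::finite \<Rightarrow> complex"
  assumes "decay w s"
  shows "decay (\<lambda>x. of_real (x $ j) * w x) (s - 1)"
proof -
  obtain C where C: "AE x in lebesgue. (1 + (norm x)^2) powr (s / 2) * cmod (w x) \<le> C"
    using assms unfolding decay_def by blast
  have m: "(\<lambda>x. of_real (x $ j) * w x) \<in> borel_measurable lebesgue"
    by (rule meas_mult[OF cont_meas decay_meas[OF assms]]) (intro continuous_intros)
  have "AE x in lebesgue. (1 + (norm x)^2) powr ((s - 1) / 2) * cmod (of_real (x $ j) * w x) \<le> C"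
    using C
  proof eventually_elim
    case (elim x)
    let ?N = "1 + (norm x)^2"
    have N1: "1 \<le> ?N" by simp
    have "\<bar>x $ j\<bar> \<le> norm x" by (rule component_le_norm_cart)
    also have "\<dots> = sqrt ((norm x)^2)" by simp
    also have "\<dots> \<le> sqrt ?N" by (rule real_sqrt_le_mono) simp
    also have "\<dots> = ?N powr (1/2)" using N1 by (simp add: powr_half_sqrt)
    finally have xj: "\<bar>x $ j\<bar> \<le> ?N powr (1/2)" .
    have "?N powr ((s - 1) / 2) * cmod (of_real (x $ j) * w x) = ?N powr ((s - 1) / 2) * (\<bar>x $ j\<bar> * cmod (w x))"
      by (simp add: norm_mult)
    also have "\<dots> \<le> ?N powr ((s - 1) / 2) * (?N powr (1/2) * cmod (w x))"
      by (intro mult_left_mono mult_right_mono xj) auto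
    also have "\<dots> = (?N powr ((s - 1) / 2) * ?N powr (1/2)) * cmod (w x)" by simp
    also have "?N powr ((s - 1) / 2) * ?N powr (1/2) = ?N powr (s / 2)"
      by (simp add: powr_add[symmetric] diff_divide_distrib)
    finally show ?case using elim by linarith
  qed
  then show ?thesis unfolding decay_def using m by blast
qed

lemma lip_axis:
  assumes "axdiff f" "\<And>z. cmod (partial j f z) \<le> B"
  shows "cmod (f (z + t *\<^sub>R axis j 1) - f z) \<le> B * \<bar>t\<bar>"
proof -
  have "norm ((\<lambda>\<sigma>. f (z + \<sigma> *\<^sub>R axis j 1)) t - (\<lambda>\<sigma>. f (z + \<sigma> *\<^sub>R axis j 1)) 0) \<le> B * norm (t - 0)"
  proof (rule differentiable_bound[of UNIV _ "\<lambda>\<sigma> h. h *\<^sub>R partial j f (z + \<sigma> *\<^sub>R axis j 1)"])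
    fix \<sigma> :: real
    show "((\<lambda>\<sigma>. f (z + \<sigma> *\<^sub>R axis j 1)) has_derivative (\<lambda>h. h *\<^sub>R partial j f (z + \<sigma> *\<^sub>R axis j 1))) (at \<sigma> within UNIV)"
      using axdiff_hvd_at[OF assms(1), of z j \<sigma>] by (simp add: has_vector_derivative_def)
    have "onorm (\<lambda>h::real. h *\<^sub>R partial j f (z + \<sigma> *\<^sub>R axis j 1)) = onorm (\<lambda>h::real. h) * norm (partial j f (z + \<sigma> *\<^sub>R axis j 1))"
      by (rule onorm_scaleR_left[OF bounded_linear_ident])
    also have "\<dots> \<le> B" using assms(2) by (simp add: onorm_id)
    finally show "onorm (\<lambda>h::real. h *\<^sub>R partial j f (z + \<sigma> *\<^sub>R axis j 1)) \<le> B" .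
  qed auto
  then show ?thesis by simp
qed

lemma test_partial_bound: "test_fun f \<Longrightarrow> \<exists>B. \<forall>z. cmod (partial j f z) \<le> B"
  using bounded_fun[OF test_fun_partial] by blast

lemma mult_shift2: "x * (y + t *\<^sub>R axis j 1) = x * y + (t * x $ j) *\<^sub>R axis j (1::real)"
  by (simp add: vec_eq_iff axis_def algebra_simps)

lemma JJ_hvd:
  fixes w :: "real^'d::finite \<Rightarrow> complex"
  assumes "decay w s" "s \<ge> 2 * real CARD('d) + 1" "test_fun \<psi>"
  shows "((\<lambda>t. JJ w \<psi> (y + t *\<^sub>R axis j 1)) has_vector_derivative
           JJ (\<lambda>x. of_real (x $ j) * w x) (partial j \<psi>) y) (at 0)"
proof -
  define wj where "wj = (\<lambda>x::real^'d. of_real (x $ j) * w x)"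
  have s2: "s \<ge> 2 * real CARD('d)" using assms(2) by simp
  have dj: "decay wj (s - 1)" unfolding wj_def by (rule decay_coord[OF assms(1)])
  have s1: "s - 1 \<ge> 2 * real CARD('d)" using assms(2) by simp
  have ax: "axdiff \<psi>" using assms(3) by (simp add: test_fun_iff smooth_axdiff)
  obtain B1 where B1: "\<And>z. cmod (partial j \<psi> z) \<le> B1" using test_partial_bound[OF assms(3)] by blast
  have wm: "w \<in> borel_measurable lebesgue" using assms(1) by (rule decay_meas)
  define q where "q = (\<lambda>h x. w x * ((\<psi> (x * (y + h *\<^sub>R axis j 1)) - \<psi> (x * y)) /\<^sub>R h))"
  have qeq: "(JJ w \<psi> (y + h *\<^sub>R axis j 1) - JJ w \<psi> (y + 0 *\<^sub>R axis j 1)) /\<^sub>R h = (LINT x|lebesgue. q h x)" for h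
  proof -
    have i1: "integrable lebesgue (\<lambda>x. w x * \<psi> (x * (y + h *\<^sub>R axis j 1)))"
      by (rule JJ_integrable[OF assms(1) s2 assms(3)])
    have i2: "integrable lebesgue (\<lambda>x. w x * \<psi> (x * y))"
      by (rule JJ_integrable[OF assms(1) s2 assms(3)])
    have "(LINT x|lebesgue. q h x) = (LINT x|lebesgue. inverse h *\<^sub>R (w x * \<psi> (x * (y + h *\<^sub>R axis j 1)) - w x * \<psi> (x * y)))"
      by (rule Bochner_Integration.integral_cong) (simp_all add: q_def right_diff_distrib scaleR_diff_right mult_scaleR_right)
    also have "\<dots> = inverse h *\<^sub>R (JJ w \<psi> (y + h *\<^sub>R axis j 1) - JJ w \<psi> y)"
      by (simp add: JJ_def i1 i2)
    finally show ?thesis by simp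
  qed
  have qm: "q h \<in> borel_measurable lebesgue" for h
  proof -
    have [measurable]: "w \<in> borel_measurable lebesgue"
      "(\<lambda>x. \<psi> (x * (y + h *\<^sub>R axis j 1))) \<in> borel_measurable lebesgue"
      "(\<lambda>x. \<psi> (x * y)) \<in> borel_measurable lebesgue"
      using wm meas_dil[OF assms(3)] by auto
    show ?thesis unfolding q_def by measurable
  qed
  show ?thesis
    unfolding vd_quot_iff tendsto_at_iff_sequentially
  proof (intro allI impI)
    fix X :: "nat \<Rightarrow> real" assume X: "\<forall>i. X i \<in> UNIV - {0}" "X \<longlonglongrightarrow> 0"
    have "(\<lambda>i. LINT x|lebesgue. q (X i) x) \<longlonglongrightarrow> (LINT x|lebesgue. wj x * partial j \<psi> (x * y))"
    proof (rule integral_dominated_convergence[where w="\<lambda>x. B1 * cmod (wj x)"])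
      show "(\<lambda>x. wj x * partial j \<psi> (x * y)) \<in> borel_measurable lebesgue"
        by (rule meas_mult[OF decay_meas[OF dj] meas_dil[OF test_fun_partial[OF assms(3)]]])
      show "q (X i) \<in> borel_measurable lebesgue" for i by (rule qm)
      have "integrable lebesgue (\<lambda>x. wj x * 1)"
        by (rule decay_integrable_mult[OF dj s1, of "\<lambda>_. 1" 1]) auto
      then show "integrable lebesgue (\<lambda>x. B1 * cmod (wj x))"
        by (intro integrable_mult_right integrable_norm) simp
      show "AE x in lebesgue. (\<lambda>i. q (X i) x) \<longlonglongrightarrow> wj x * partial j \<psi> (x * y)"
      proof (rule AE_I2)
        fix x :: "real^'d"
        show "(\<lambda>i. q (X i) x) \<longlonglongrightarrow> wj x * partial j \<psi> (x * y)"
        proof (cases "x $ j = 0")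
          case True
          then show ?thesis by (simp add: q_def wj_def mult_shift2)
        next
          case False
          define G where "G = (\<lambda>t. \<psi> (x * y + t *\<^sub>R axis j 1))"
          have "(G has_vector_derivative partial j \<psi> (x * y)) (at 0)"
            unfolding G_def by (rule axdiff_hvd[OF ax])
          then have lim: "((\<lambda>t. (G t - G 0) /\<^sub>R t) \<longlongrightarrow> partial j \<psi> (x * y)) (at 0)"
            by (simp add: vd_quot_iff)
          have Xj: "\<forall>i. X i * x $ j \<in> UNIV - {0}" using X(1) False by simp
          have Xj0: "(\<lambda>i. X i * x $ j) \<longlonglongrightarrow> 0"
            using tendsto_mult[OF X(2) tendsto_const[of "x $ j"]] by simp
          have seq: "(\<lambda>i. (G (X i * x $ j) - G 0) /\<^sub>R (X i * x $ j)) \<longlonglongrightarrow> partial j \<psi> (x * y)"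
            using lim[unfolded tendsto_at_iff_sequentially, rule_format, of "\<lambda>i. X i * x $ j"] Xj Xj0
            by (simp add: o_def)
          have eqi: "q (X i) x = w x * (of_real (x $ j) * ((G (X i * x $ j) - G 0) /\<^sub>R (X i * x $ j)))" for i
          proof -
            have Xi: "X i \<noteq> 0" using X(1) by simp
            have "(\<psi> (x * (y + X i *\<^sub>R axis j 1)) - \<psi> (x * y)) /\<^sub>R X i = (G (X i * x $ j) - G 0) /\<^sub>R X i"
              by (simp add: G_def mult_shift2)
            also have "\<dots> = (x $ j) *\<^sub>R ((G (X i * x $ j) - G 0) /\<^sub>R (X i * x $ j))"
              using Xi False by simp
            also have "\<dots> = of_real (x $ j) * ((G (X i * x $ j) - G 0) /\<^sub>R (X i * x $ j))"
              by (simp only: scaleR_conv_of_real)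
            finally have e: "(\<psi> (x * (y + X i *\<^sub>R axis j 1)) - \<psi> (x * y)) /\<^sub>R X i = of_real (x $ j) * ((G (X i * x $ j) - G 0) /\<^sub>R (X i * x $ j))" .
            show ?thesis by (simp only: q_def e)
          qed
          have "(\<lambda>i. w x * (of_real (x $ j) * ((G (X i * x $ j) - G 0) /\<^sub>R (X i * x $ j)))) \<longlonglongrightarrow> w x * (of_real (x $ j) * partial j \<psi> (x * y))"
            by (intro tendsto_mult_left seq)
          then show ?thesis unfolding eqi wj_def by (simp add: mult.assoc mult.left_commute)
        qed
      qed
      show "AE x in lebesgue. norm (q (X i) x) \<le> B1 * cmod (wj x)" for i
      proof (rule AE_I2)
        fix x :: "real^'d"
        have Xi: "X i \<noteq> 0" using X(1) by simp
        have L: "cmod (\<psi> (x * y + (X i * x $ j) *\<^sub>R axis j 1) - \<psi> (x * y)) \<le> B1 * \<bar>X i * x $ j\<bar>"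
          by (rule lip_axis[OF ax B1])
        have "norm (q (X i) x) = cmod (w x) * (cmod (\<psi> (x * y + (X i * x $ j) *\<^sub>R axis j 1) - \<psi> (x * y)) / \<bar>X i\<bar>)"
          by (simp add: q_def mult_shift2 norm_mult divide_inverse abs_inverse)
        also have "\<dots> \<le> cmod (w x) * (B1 * \<bar>X i * x $ j\<bar> / \<bar>X i\<bar>)"
          by (intro mult_left_mono divide_right_mono L) auto
        also have "\<dots> = B1 * cmod (wj x)"
          using Xi by (simp add: wj_def norm_mult abs_mult)
        finally show "norm (q (X i) x) \<le> B1 * cmod (wj x)" .
      qed
    qed
    then show "((\<lambda>t. (JJ w \<psi> (y + t *\<^sub>R axis j 1) - JJ w \<psi> (y + 0 *\<^sub>R axis j 1)) /\<^sub>R t) \<circ> X) \<longlonglongrightarrow>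
        JJ (\<lambda>x. of_real (x $ j) * w x) (partial j \<psi>) y"
      unfolding o_def qeq by (simp add: JJ_def wj_def)
  qed
qed



definition FF :: "((real^'d::finite \<Rightarrow> complex) \<times> (real^'d \<Rightarrow> complex)) list \<Rightarrow> real^'d \<Rightarrow> complex" where
  "FF L y = sum_list (map (\<lambda>(w, \<psi>). JJ w \<psi> y) L)"

definition good :: "((real^'d::finite \<Rightarrow> complex) \<times> (real^'d \<Rightarrow> complex)) list \<Rightarrow> real \<Rightarrow> bool" where
  "good L s \<longleftrightarrow> (\<forall>(w, \<psi>) \<in> set L. decay w s \<and> test_fun \<psi>)"

definition stp :: "((real^'d::finite \<Rightarrow> complex) \<times> (real^'d \<Rightarrow> complex)) list \<Rightarrow> 'd \<Rightarrow> ((real^'d \<Rightarrow> complex) \<times> (real^'d \<Rightarrow> complex)) list" where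
  "stp L j = map (\<lambda>(w, \<psi>). (\<lambda>x. of_real (x $ j) * w x, partial j \<psi>)) L"

lemma FF_Nil[simp]: "FF [] y = 0" by (simp add: FF_def)
lemma FF_Cons[simp]: "FF ((w, \<psi>) # L) y = JJ w \<psi> y + FF L y" by (simp add: FF_def)
lemma good_Cons[simp]: "good ((w, \<psi>) # L) s \<longleftrightarrow> decay w s \<and> test_fun \<psi> \<and> good L s"
  by (simp add: good_def)
lemma good_Nil[simp]: "good [] s" by (simp add: good_def)
lemma stp_Nil[simp]: "stp [] j = []" by (simp add: stp_def)
lemma stp_Cons[simp]: "stp ((w, \<psi>) # L) j = (\<lambda>x. of_real (x $ j) * w x, partial j \<psi>) # stp L j"
  by (simp add: stp_def)

lemma FF_hvd:
  assumes "good L s" "s \<ge> 2 * real CARD('d::finite) + 1"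
  shows "((\<lambda>t. FF L (y + t *\<^sub>R axis j 1)) has_vector_derivative FF (stp L j) (y :: real^'d)) (at 0)"
  using assms(1)
proof (induction L)
  case Nil then show ?case by simp
next
  case (Cons a L)
  obtain w \<psi> where a: "a = (w, \<psi>)" by fastforce
  show ?case using Cons unfolding a
    by (simp, intro has_vector_derivative_add JJ_hvd[OF _ assms(2)]) auto
qed

lemma FF_partial:
  assumes "good L s" "s \<ge> 2 * real CARD('d::finite) + 1"
  shows "partial j (FF L) = FF (stp L j :: ((real^'d \<Rightarrow> complex) \<times> _) list)"
  by (rule ext, rule partial_eqI, rule FF_hvd[OF assms])

lemma FF_cont:
  assumes "good L s" "s \<ge> 2 * real CARD('d::finite)"
  shows "continuous_on UNIV (FF L :: real^'d \<Rightarrow> complex)"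
  using assms(1)
proof (induction L)
  case Nil then show ?case by (simp add: FF_def)
next
  case (Cons a L)
  obtain w \<psi> where a: "a = (w, \<psi>)" by fastforce
  have e: "FF (a # L) = (\<lambda>y. JJ w \<psi> y + FF L y)" unfolding a by (simp add: fun_eq_iff)
  show ?case using Cons unfolding e unfolding a
    by (intro continuous_on_add JJ_cont[OF _ assms(2)]) auto
qed

lemma good_stp: "good L s \<Longrightarrow> good (stp L j) (s - 1)"
  by (induction L) (auto simp: decay_coord test_fun_partial)

lemma FF_pderivs:
  assumes "good L s" "s \<ge> 2 * real CARD('d::finite) + 1 + real (length js)"
  shows "\<exists>L'. pderivs js (FF L :: real^'d \<Rightarrow> complex) = FF L' \<and> good L' (s - real (length js))"
  using assms(2)
proof (induction js)
  case Nil then show ?case using assms(1) by auto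
next
  case (Cons j js)
  then obtain L' where L': "pderivs js (FF L :: real^'d \<Rightarrow> complex) = FF L'" "good L' (s - real (length js))"
    by auto
  have "pderivs (j # js) (FF L :: real^'d \<Rightarrow> complex) = FF (stp L' j)"
    unfolding pderivs_Cons L'(1) by (rule FF_partial[OF L'(2)]) (use Cons.prems in simp)
  moreover have "good (stp L' j) (s - real (length (j # js)))"
    using good_stp[OF L'(2)] by (simp add: algebra_simps)
  ultimately show ?case by blast
qed

lemma FF_smooth_upto:
  assumes "good L s" "s \<ge> 2 * real CARD('d::finite) + 1 + real (length js)"
  shows "continuous_on UNIV (pderivs js (FF L :: real^'d \<Rightarrow> complex)) \<and>
    (\<forall>j x. (\<lambda>t::real. pderivs js (FF L) (x + t *\<^sub>R axis j 1)) differentiable (at 0))"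
proof -
  obtain L' where L': "pderivs js (FF L :: real^'d \<Rightarrow> complex) = FF L'" "good L' (s - real (length js))"
    using FF_pderivs[OF assms] by blast
  have s': "s - real (length js) \<ge> 2 * real CARD('d) + 1" using assms(2) by simp
  show ?thesis unfolding L'(1)
    using FF_cont[OF L'(2)] s' FF_hvd[OF L'(2) s'] differentiableI_vector by fastforce
qed

lemma dense_eq:
  fixes f g :: "real^'d::finite \<Rightarrow> complex"
  assumes "continuous_on UNIV f" "continuous_on UNIV g" "\<And>y. \<forall>i. y $ i \<noteq> 0 \<Longrightarrow> f y = g y"
  shows "f = g"
proof
  fix y :: "real^'d"
  define u where "u = (\<lambda>n::nat. \<chi> i. if y $ i = 0 then 1 / (real n + 1) else y $ i)"
  have un: "\<forall>i. u n $ i \<noteq> 0" for n by (simp add: u_def)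
  have "u \<longlonglongrightarrow> y"
  proof (rule vec_tendstoI)
    fix i
    show "(\<lambda>n. u n $ i) \<longlonglongrightarrow> y $ i"
    proof (cases "y $ i = 0")
      case True
      then have "(\<lambda>n. u n $ i) = (\<lambda>n. 1 / (real n + 1))" by (simp add: u_def fun_eq_iff)
      then show ?thesis using True LIMSEQ_inverse_real_of_nat by (simp add: inverse_eq_divide add.commute)
    next
      case False then show ?thesis by (simp add: u_def)
    qed
  qed
  have "(\<lambda>n. f (u n)) \<longlonglongrightarrow> f y" by (rule seq_cont[OF assms(1) \<open>u \<longlonglongrightarrow> y\<close>])
  moreover have "(\<lambda>n. f (u n)) \<longlonglongrightarrow> g y"
    using seq_cont[OF assms(2) \<open>u \<longlonglongrightarrow> y\<close>] assms(3)[OF un] by simp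
  ultimately show "f y = g y" by (rule LIMSEQ_unique)
qed

lemma T_repr:
  fixes \<phi> :: "real^'d::finite \<Rightarrow> complex"
  assumes "smooth_fun \<phi>"
  shows "(\<Sum>(js, t) \<leftarrow> ts. LINT x|lebesgue. t x * euler_transpose js (\<lambda>x. \<phi> (x * y)) x)
       = FF (map (\<lambda>(js, t). (t, euler_transpose js \<phi>)) ts) y"
  by (induction ts) (auto simp: euler_transpose_dil[OF assms] JJ_def)

theorem proposition1:
  fixes T :: "(real^'d::finite \<Rightarrow> complex) \<Rightarrow> complex"
    and \<phi> :: "real^'d \<Rightarrow> complex"
  assumes "OH' T"
    and "test_fun \<phi>"
  shows "\<exists>g. smooth_fun g \<and> (\<forall>y::real^'d. (\<forall>i. y $ i \<noteq> 0) \<longrightarrow> g y = T (\<lambda>x. \<phi> (x * y)))"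
proof -
  have "\<forall>k::nat. \<exists>ts :: ('d list \<times> (real^'d \<Rightarrow> complex)) list.
        (\<forall>(js, t) \<in> set ts. t \<in> borel_measurable lebesgue \<and>
            (\<exists>C. AE x in lebesgue. (1 + (norm x)^2) powr (real k / 2) * cmod (t x) \<le> C)) \<and>
        (\<forall>\<phi>. test_fun \<phi> \<longrightarrow>
            T \<phi> = (\<Sum>(js, t) \<leftarrow> ts. LINT x|lebesgue. t x * euler_transpose js \<phi> x))"
    (is "\<forall>k. \<exists>ts. ?P k ts")
    using assms(1) unfolding OH'_def by blast
  from choice[OF this] obtain TS where TS0: "\<forall>k. ?P k (TS k)" by blast
  note TS = TS0[rule_format, THEN conjunct1] TS0[rule_format, THEN conjunct2, rule_format]
  have sm: "smooth_fun \<phi>" using assms(2) by (simp add: test_fun_iff)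
  define L where "L = (\<lambda>k. map (\<lambda>(js, t). (t, euler_transpose js \<phi>)) (TS k))"
  have good: "good (L k) (real k)" for k
    unfolding good_def L_def decay_def
    using TS(1)[of k] test_fun_euler_transpose[OF assms(2)] by auto
  have agree: "FF (L k) y = T (\<lambda>x. \<phi> (x * y))" if "\<forall>i. y $ i \<noteq> 0" for k y
    using TS(2)[OF test_fun_dil[OF assms(2) that], of k] T_repr[OF sm] by (simp add: L_def)
  define K0 where "K0 = 2 * CARD('d) + 1"
  have cont: "continuous_on UNIV (FF (L k))" if "k \<ge> K0" for k
    by (rule FF_cont[OF good]) (use that in \<open>simp add: K0_def\<close>)
  have same: "FF (L k) = FF (L K0)" if "k \<ge> K0" for k
    by (rule dense_eq[OF cont[OF that] cont[OF order_refl]]) (simp add: agree)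
  have "smooth_fun (FF (L K0))"
    unfolding smooth_fun_def
  proof
    fix js :: "'d list"
    let ?k = "K0 + length js"
    have "FF (L K0) = FF (L ?k)" using same[of ?k] by simp
    moreover have "continuous_on UNIV (pderivs js (FF (L ?k))) \<and>
      (\<forall>j x. (\<lambda>t::real. pderivs js (FF (L ?k)) (x + t *\<^sub>R axis j 1)) differentiable (at 0))"
      by (rule FF_smooth_upto[OF good]) (simp add: K0_def)
    ultimately show "continuous_on UNIV (pderivs js (FF (L K0))) \<and>
      (\<forall>j x. (\<lambda>t::real. pderivs js (FF (L K0)) (x + t *\<^sub>R axis j 1)) differentiable (at 0))"
      by simp
  qed
  then show ?thesis using agree by blast
qed


end
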